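(* Let $\mathrm R(t,s):=\sin\left(\frac{\pi}{2}t\right)\frac{s+\sqrt{8-s^2}}{2\sqrt2}$ on $[0,1]\times[2,2\sqrt2]$ and let $\widehat{\mathrm R}$ be its concave envelope on this domain. For $(t,s)\in(0,1]\times[2,2\sqrt2]$, writing $\epsilon=1-\frac{s}{2\sqrt2}$, one has $\mathrm R(t,s)=\widehat{\mathrm R}(t,s)$ if and only if $$\frac{\tan\left(\frac{\pi}{2}t\right)}{\frac{\pi}{2}t}\ \ge\ \frac{2+\sqrt{(2-\epsilon)\epsilon}-\epsilon(5-2\epsilon)}{2(1-\epsilon)}$$ (with the left side interpreted as $+\infty$ at $t=1$). Moreover, this condition is implied by $\frac{\frac{\pi}{2}t}{\sin(\frac{\pi}{2}t)}\ge \frac{s+\sqrt{8-s^2}}{2\sqrt2}$, i.e. by $\frac{\pi}{2}t\ge \mathrm R(t,s)$.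
   Context: The concave envelope of a function $F$ on a convex domain $D$ is the pointwise smallest concave function $\widehat F:D\to\mathbb R$ with $\widehat F\ge F$ on $D$. *)

theory Defs
  imports "HOL-Analysis.Analysis"
begin

definition concave_envelope :: "'a::real_vector set \<Rightarrow> ('a \<Rightarrow> real) \<Rightarrow> 'a \<Rightarrow> real" where
  "concave_envelope D F x = Inf {g x | g. concave_on D g \<and> (\<forall>y\<in>D. F y \<le> g y)}"

definition RR :: "real \<times> real \<Rightarrow> real" where
  "RR p = sin (pi / 2 * fst p) * (snd p + sqrt (8 - (snd p)\<^sup>2)) / (2 * sqrt 2)"

definition domR :: "(real \<times> real) set" where
  "domR = {0..1} \<times> {2..2 * sqrt 2}"

end

theory Submission
  imports Defs
begin

lemma mono_helper:
  fixes f f' :: "real \<Rightarrow> real"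
  assumes "a \<le> b" "\<And>y. a \<le> y \<Longrightarrow> y \<le> b \<Longrightarrow> (f has_real_derivative f' y) (at y)"
    "\<And>y. a \<le> y \<Longrightarrow> y \<le> b \<Longrightarrow> 0 \<le> f' y"
  shows "f a \<le> f b"
  using DERIV_nonneg_imp_nondecreasing[of a b f] assms by blast

lemma antimono_helper:
  fixes f f' :: "real \<Rightarrow> real"
  assumes "a \<le> b" "\<And>y. a \<le> y \<Longrightarrow> y \<le> b \<Longrightarrow> (f has_real_derivative f' y) (at y)"
    "\<And>y. a \<le> y \<Longrightarrow> y \<le> b \<Longrightarrow> f' y \<le> 0"
  shows "f b \<le> f a"
  using DERIV_nonpos_imp_nonincreasing[of a b f] assms by blast

lemma cos_lb: fixes x :: real assumes "0 \<le> x" shows "1 - x^2/2 \<le> cos x"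
proof -
  have "(\<lambda>y. cos y - 1 + y^2/2) 0 \<le> (\<lambda>y. cos y - 1 + y^2/2) x"
    by (rule mono_helper[OF assms, of _ "\<lambda>y. - sin y + y"]) (auto intro!: derivative_eq_intros simp: sin_x_le_x)
  thus ?thesis by simp
qed

lemma sin_lb: fixes x :: real assumes "0 \<le> x" shows "x - x^3/6 \<le> sin x"
proof -
  have "(\<lambda>y. sin y - y + y^3/6) 0 \<le> (\<lambda>y. sin y - y + y^3/6) x"
  proof (rule mono_helper[OF assms, of _ "\<lambda>y. cos y - 1 + y^2/2"])
    fix y :: real assume "0 \<le> y" "y \<le> x"
    show "0 \<le> cos y - 1 + y^2/2" using cos_lb[OF \<open>0 \<le> y\<close>] by simp
  qed (auto intro!: derivative_eq_intros)
  thus ?thesis by simp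
qed

lemma cos_ub: fixes x :: real assumes "0 \<le> x" shows "cos x \<le> 1 - x^2/2 + x^4/24"
proof -
  have "(\<lambda>y. 1 - y^2/2 + y^4/24 - cos y) 0 \<le> (\<lambda>y. 1 - y^2/2 + y^4/24 - cos y) x"
  proof (rule mono_helper[OF assms, of _ "\<lambda>y. - y + y^3/6 + sin y"])
    fix y :: real assume "0 \<le> y" "y \<le> x"
    show "0 \<le> - y + y^3/6 + sin y" using sin_lb[OF \<open>0 \<le> y\<close>] by simp
  qed (auto intro!: derivative_eq_intros)
  thus ?thesis by simp
qed

lemma sq_cos_le: fixes x :: real assumes "0 \<le> x" "x \<le> pi/2" shows "x^2 * cos x \<le> (sin x)^2"
proof -
  have x2: "x \<le> 2" using assms pi_less_4 by linarith
  have a: "0 \<le> x - x^3/6"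
  proof -
    have "x^2 \<le> 2^2" using x2 assms(1) by (intro power_mono) auto 
    hence "x * x^2 \<le> x * 6" using assms(1) by (intro mult_left_mono) auto
    moreover have "x^3 = x * x^2" by (simp add: power3_eq_cube power2_eq_square)
    ultimately show ?thesis by simp
  qed
  have "x^2 * cos x \<le> x^2 * (1 - x^2/2 + x^4/24)" by (intro mult_left_mono cos_ub assms) auto
  also have "\<dots> \<le> (x - x^3/6)^2"
  proof -
    have "x^2 \<le> 2^2" using x2 assms(1) by (intro power_mono) auto
    hence "0 \<le> x^4 * (12 - x^2) / 72" by (intro divide_nonneg_pos mult_nonneg_nonneg) auto
    moreover have "(x - x^3/6)^2 - x^2 * (1 - x^2/2 + x^4/24) = x^4 * (12 - x^2) / 72"
      by (simp add: power2_eq_square power3_eq_cube power4_eq_xxxx algebra_simps)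
    ultimately show ?thesis by linarith
  qed
  also have "\<dots> \<le> (sin x)^2" using a sin_lb[OF assms(1)] by (intro power_mono) auto
  finally show ?thesis .
qed

context
  fixes d a0 a1 x :: real
  assumes dpos: "d > 0"
begin

definition "QQ w = 2 * w^2 + 2 * d*w + d^2"
definition "EE u = sqrt (QQ (sin u)) - a0 - a1 * u"
definition "FF u = (2 * sin u + d) * cos u / sqrt (QQ (sin u))"
definition "PP u = d^2 * (cos u)^2 - (2 * sin u + d) * sin u * QQ (sin u)"

lemma QQpos: "QQ w > 0"
proof -
  have "QQ w = w^2 + (w+d)^2" by (simp add: QQ_def power2_eq_square algebra_simps)
  moreover have "w^2 + (w+d)^2 > 0" using dpos
    by (cases "w = 0") (auto intro: add_pos_nonneg add_nonneg_pos)
  ultimately show ?thesis by simp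
qed

lemma dQQ: "((\<lambda>u. QQ (sin u)) has_real_derivative (4 * sin u + 2 * d) * cos u) (at u)"
  unfolding QQ_def by (auto intro!: derivative_eq_intros simp: algebra_simps)

lemma dNN: "((\<lambda>u. sqrt (QQ (sin u))) has_real_derivative (2 * sin u + d) * cos u / sqrt (QQ (sin u))) (at u)"
proof -
  have "((\<lambda>u. sqrt (QQ (sin u))) has_real_derivative inverse (sqrt (QQ (sin u))) / 2 * ((4 * sin u + 2 * d) * cos u)) (at u)"
    by (rule DERIV_chain2[OF DERIV_real_sqrt[OF QQpos] dQQ])
  moreover have "inverse (sqrt (QQ (sin u))) / 2 * ((4 * sin u + 2 * d) * cos u) = (2 * sin u + d) * cos u / sqrt (QQ (sin u))"
    using QQpos[of "sin u"] by (simp add: field_simps)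
  ultimately show ?thesis by simp
qed

lemma dEE: "(EE has_real_derivative (FF u - a1)) (at u)"
proof -
  have "((\<lambda>u. sqrt (QQ (sin u)) - a0 - a1 * u) has_real_derivative ((2 * sin u + d) * cos u / sqrt (QQ (sin u)) - 0 - a1 * 1)) (at u)"
    by (intro DERIV_diff dNN DERIV_const DERIV_cmult DERIV_ident)
  thus ?thesis unfolding EE_def[abs_def] FF_def by simp
qed

lemma dFF: "(FF has_real_derivative (PP u / (QQ (sin u) * sqrt (QQ (sin u))))) (at u)"
proof -
  have n0: "sqrt (QQ (sin u)) > 0" using QQpos by simp
  have d1: "((\<lambda>u. (2 * sin u + d) * cos u) has_real_derivative (2 * cos u * cos u - (2 * sin u + d) * sin u)) (at u)"
    by (auto intro!: derivative_eq_intros)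
  have "(FF has_real_derivative ((2 * cos u * cos u - (2 * sin u + d) * sin u) * sqrt (QQ (sin u)) - (2 * sin u + d) * cos u * ((2 * sin u + d) * cos u / sqrt (QQ (sin u))))
     / (sqrt (QQ (sin u)) * sqrt (QQ (sin u)))) (at u)"
    unfolding FF_def[abs_def] using n0 by (intro DERIV_divide d1 dNN) auto
  moreover have "((2 * cos u * cos u - (2 * sin u + d) * sin u) * sqrt (QQ (sin u)) - (2 * sin u + d) * cos u * ((2 * sin u + d) * cos u / sqrt (QQ (sin u))))
     / (sqrt (QQ (sin u)) * sqrt (QQ (sin u))) = PP u / (QQ (sin u) * sqrt (QQ (sin u)))"
  proof -
    have sq: "sqrt (QQ (sin u)) * sqrt (QQ (sin u)) = QQ (sin u)" using QQpos by (simp add: less_imp_le)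
    define A where "A = 2 * cos u * cos u - (2 * sin u + d) * sin u"
    define B where "B = (2 * sin u + d) * cos u"
    define N where "N = sqrt (QQ (sin u))"
    have sq': "N * N = QQ (sin u)" using sq N_def by simp
    have n0': "N > 0" using n0 N_def by simp
    have "(A * N - B * (B / N)) / (N * N) = (A * (N * N) - B * B) / ((N * N) * N)"
      using n0' by (simp add: field_simps)
    also have "A * (N * N) - B * B = PP u"
      unfolding sq' A_def B_def PP_def QQ_def by algebra
    finally show ?thesis unfolding A_def B_def N_def sq' using QQpos[of "sin u"] by simp
  qed
  ultimately show ?thesis by simp
qed

lemma QQ_mono: "0 \<le> a \<Longrightarrow> a \<le> b \<Longrightarrow> QQ a \<le> QQ b"
  unfolding QQ_def using dpos
  by (intro add_mono mult_left_mono power_mono) auto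

lemma g_mono: "0 \<le> a \<Longrightarrow> a \<le> b \<Longrightarrow> (2 * a + d) * a * QQ a \<le> (2 * b + d) * b * QQ b"
  using dpos QQpos[of a] QQ_mono[of a b]
  by (intro mult_mono) auto

lemma PP_mono: assumes "0 \<le> u" "u \<le> v" "v \<le> pi/2" shows "PP v \<le> PP u"
proof -
  have c: "cos v \<le> cos u" using assms by (intro cos_monotone_0_pi_le) auto
  have c0: "0 \<le> cos v" using assms by (intro cos_ge_zero) auto
  have s: "sin u \<le> sin v" using assms by (intro sin_monotone_2pi_le) auto
  have s0: "0 \<le> sin u" using assms by (intro sin_ge_zero) auto
  have "(cos v)^2 \<le> (cos u)^2" using c c0 by (intro power_mono) auto
  hence "d^2 * (cos v)^2 \<le> d^2 * (cos u)^2" by (intro mult_left_mono) auto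
  moreover have "(2 * sin u + d) * sin u * QQ (sin u) \<le> (2 * sin v + d) * sin v * QQ (sin v)"
    using g_mono s s0 by blast
  ultimately show ?thesis unfolding PP_def by linarith
qed

lemma F_up: assumes "a \<le> b" "\<And>y. a \<le> y \<Longrightarrow> y \<le> b \<Longrightarrow> PP y \<ge> 0" shows "FF a \<le> FF b"
proof (rule mono_helper[OF assms(1) dFF])
  fix y assume "a \<le> y" "y \<le> b"
  hence "PP y \<ge> 0" using assms(2) by auto
  moreover have "QQ (sin y) * sqrt (QQ (sin y)) > 0" using QQpos by simp
  ultimately show "0 \<le> PP y / (QQ (sin y) * sqrt (QQ (sin y)))" by simp
qed

lemma F_down: assumes "a \<le> b" "\<And>y. a \<le> y \<Longrightarrow> y \<le> b \<Longrightarrow> PP y \<le> 0" shows "FF b \<le> FF a"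
proof (rule antimono_helper[OF assms(1) dFF])
  fix y assume "a \<le> y" "y \<le> b"
  hence "PP y \<le> 0" using assms(2) by auto
  moreover have "QQ (sin y) * sqrt (QQ (sin y)) > 0" using QQpos by simp
  ultimately show "PP y / (QQ (sin y) * sqrt (QQ (sin y))) \<le> 0" by (simp add: divide_nonpos_pos)
qed

lemma E_up: assumes "a \<le> b" "\<And>y. a \<le> y \<Longrightarrow> y \<le> b \<Longrightarrow> FF y \<ge> a1" shows "EE a \<le> EE b"
  by (rule mono_helper[OF assms(1) dEE]) (use assms(2) in auto)

lemma E_down: assumes "a \<le> b" "\<And>y. a \<le> y \<Longrightarrow> y \<le> b \<Longrightarrow> FF y \<le> a1" shows "EE b \<le> EE a"
  by (rule antimono_helper[OF assms(1) dEE]) (use assms(2) in auto)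

lemma EE_le:
  assumes x: "0 < x" "x \<le> pi/2" and E0: "d \<le> a0" and Ex: "EE x = 0" and Fx: "FF x = a1"
    and u: "0 \<le> u" "u \<le> pi/2"
  shows "EE u \<le> 0"
proof -
  have EE0: "EE 0 \<le> 0" unfolding EE_def QQ_def using dpos E0 by simp
  have step1: "PP x \<le> 0"
  proof (rule ccontr)
    assume "\<not> PP x \<le> 0"
    hence px: "PP x > 0" by simp
    have ppos: "PP y > 0" if "0 \<le> y" "y \<le> x" for y
      using PP_mono[of y x] that x px by linarith
    have Flt: "FF y < a1" if "0 \<le> y" "y < x" for y
    proof -
      have "FF y < FF x"
      proof (rule DERIV_pos_imp_increasing[OF that(2)])
        fix z assume "y \<le> z" "z \<le> x"
        hence "PP z > 0" using ppos that by auto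
        moreover have "QQ (sin z) * sqrt (QQ (sin z)) > 0" using QQpos by simp
        ultimately show "\<exists>l. (FF has_real_derivative l) (at z) \<and> 0 < l"
          using dFF by (intro exI[of _ "PP z / (QQ (sin z) * sqrt (QQ (sin z)))"]) auto
      qed
      thus ?thesis using Fx by simp
    qed
    have "EE (x/2) < EE 0"
    proof (rule DERIV_neg_imp_decreasing[of 0 "x/2" EE])
      show "0 < x/2" using x by simp
      fix z assume "0 \<le> z" "z \<le> x/2"
      hence "FF z - a1 < 0" using Flt[of z] x by auto
      thus "\<exists>l. (EE has_real_derivative l) (at z) \<and> l < 0" using dEE by blast
    qed
    moreover have "EE x \<le> EE (x/2)"
    proof (rule E_down)
      show "x/2 \<le> x" using x by simp
      fix y assume "x/2 \<le> y" "y \<le> x"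
      thus "FF y \<le> a1" using Flt[of y] Fx x by (cases "y = x") auto
    qed
    ultimately show False using Ex EE0 by linarith
  qed
  have claimA: "FF v \<ge> a1" if "0 \<le> v" "v \<le> x" "PP v \<le> 0" for v
  proof -
    have "FF x \<le> FF v"
      by (rule F_down[OF that(2)]) (use PP_mono[of v] that x in fastforce)
    thus ?thesis using Fx by simp
  qed
  show ?thesis
  proof (cases "x \<le> u")
    case True
    have "EE u \<le> EE x"
    proof (rule E_down[OF True])
      fix y assume y: "x \<le> y" "y \<le> u"
      have "FF y \<le> FF x"
        by (rule F_down[OF y(1)]) (use PP_mono[of x] step1 x y u in fastforce)
      thus "FF y \<le> a1" using Fx by simp
    qed
    thus ?thesis using Ex by simp
  next
    case False
    hence ux: "u \<le> x" by simp
    show ?thesis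
    proof (cases "PP u \<le> 0")
      case True
      have "EE u \<le> EE x"
        by (rule E_up[OF ux]) (use claimA PP_mono[of u] True u x in fastforce)
      thus ?thesis using Ex by simp
    next
      case False
      hence pu: "PP u > 0" by simp
      have ppos: "PP y > 0" if "0 \<le> y" "y \<le> u" for y
        using PP_mono[of y u] that u pu by linarith
      show ?thesis
      proof (cases "FF u \<le> a1")
        case True
        have "EE u \<le> EE 0"
        proof (rule E_down[OF u(1)])
          fix y assume y: "0 \<le> y" "y \<le> u"
          have "FF y \<le> FF u" by (rule F_up[OF y(2)]) (use ppos y in \<open>force intro: less_imp_le\<close>)
          thus "FF y \<le> a1" using True by simp
        qed
        thus ?thesis using EE0 by simp
      next
        case False
        have "EE u \<le> EE x"
        proof (rule E_up[OF ux])
          fix v assume v: "u \<le> v" "v \<le> x"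
          show "FF v \<ge> a1"
          proof (cases "PP v \<le> 0")
            case True thus ?thesis using claimA v u by auto
          next
            case False
            have "FF u \<le> FF v"
            proof (rule F_up[OF v(1)])
              fix y assume "u \<le> y" "y \<le> v"
              hence "PP v \<le> PP y" using PP_mono[of y v] v u x by linarith
              thus "PP y \<ge> 0" using False by linarith
            qed
            thus ?thesis using \<open>\<not> FF u \<le> a1\<close> by simp
          qed
        qed
        thus ?thesis using Ex by simp
      qed
    qed
  qed
qed

lemma E_main:
  assumes "0 < x" "x \<le> pi/2" "d \<le> a0"
    "sqrt (2 * (sin x)^2 + 2 * d * sin x + d^2) = a0 + a1 * x"
    "(2 * sin x + d) * cos x / sqrt (2 * (sin x)^2 + 2 * d * sin x + d^2) = a1"
    "0 \<le> u" "u \<le> pi/2"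
  shows "sqrt (2 * (sin u)^2 + 2 * d * sin u + d^2) \<le> a0 + a1 * u"
proof -
  have "EE x = 0" using assms(4) by (simp add: EE_def QQ_def)
  moreover have "FF x = a1" unfolding FF_def QQ_def using assms(5) by simp
  ultimately have "EE u \<le> 0" using EE_le[of u] assms by simp
  thus ?thesis unfolding EE_def QQ_def by simp
qed

end

lemma sin_tangent:
  fixes u x :: real
  assumes "0 \<le> u" "u \<le> pi/2" "0 \<le> x" "x \<le> pi/2"
  shows "sin u \<le> sin x + cos x * (u - x)"
proof (cases "x \<le> u")
  case True
  have "(\<lambda>y. sin x + cos x * (y - x) - sin y) x \<le> (\<lambda>y. sin x + cos x * (y - x) - sin y) u"
  proof (rule mono_helper[OF True, of _ "\<lambda>y. cos x - cos y"])
    fix y assume "x \<le> y" "y \<le> u"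
    thus "0 \<le> cos x - cos y" using assms by (simp add: cos_monotone_0_pi_le)
  qed (auto intro!: derivative_eq_intros)
  thus ?thesis by simp
next
  case False
  have "(\<lambda>y. sin x + cos x * (y - x) - sin y) x \<le> (\<lambda>y. sin x + cos x * (y - x) - sin y) u"
  proof (rule antimono_helper[of u x _ "\<lambda>y. cos x - cos y"])
    fix y assume "u \<le> y" "y \<le> x"
    thus "cos x - cos y \<le> 0" using assms by (simp add: cos_monotone_0_pi_le)
  qed (use False in \<open>auto intro!: derivative_eq_intros\<close>)
  thus ?thesis by simp
qed

lemma cs2:
  fixes a b c s :: real
  assumes "c^2 + s^2 = 1"
  shows "a * c + b * s \<le> sqrt (a^2 + b^2)"
proof (rule real_le_rsqrt)
  have "(a * c + b * s)^2 + (a * s - b * c)^2 = (a^2 + b^2) * (c^2 + s^2)"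
    by (simp add: power2_eq_square algebra_simps)
  hence e: "(a * c + b * s)^2 + (a * s - b * c)^2 = a^2 + b^2" using assms by simp
  have "(a * s - b * c)^2 \<ge> 0" by simp
  thus "(a * c + b * s)^2 \<le> a^2 + b^2" using e by linarith
qed

lemma convex_domR: "convex domR"
  unfolding domR_def by (intro convex_Times convex_real_interval)

lemma sqrt_comb:
  fixes a b m n :: real
  assumes "a^2 \<le> 8" "b^2 \<le> 8" "m \<ge> 0" "n \<ge> 0" "m + n = 1"
  shows "m * sqrt (8 - a^2) + n * sqrt (8 - b^2) \<le> sqrt (8 - (m * a + n * b)^2)"
proof (rule real_le_rsqrt)
  define A where "A = sqrt (8 - a^2)"
  define B where "B = sqrt (8 - b^2)"
  have A2: "A^2 = 8 - a^2" unfolding A_def using assms by simp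
  have B2: "B^2 = 8 - b^2" unfolding B_def using assms by simp
  have "2 * (A * B + a * b) \<le> A^2 + B^2 + a^2 + b^2"
    using sum_squares_ge_zero[of "A - B" "a - b"] by (simp add: power2_eq_square algebra_simps)
  hence ab: "A * B + a * b \<le> 8" using A2 B2 by simp
  have "(m * A + n * B)^2 + (m * a + n * b)^2 = m^2 * (A^2 + a^2) + n^2 * (B^2 + b^2) + 2 * m * n * (A * B + a * b)"
    by (simp add: power2_eq_square algebra_simps)
  also have "\<dots> \<le> m^2 * 8 + n^2 * 8 + 2 * m * n * 8"
  proof -
    have "(2 * m * n) * (A * B + a * b) \<le> (2 * m * n) * 8" using ab assms by (intro mult_left_mono) auto
    thus ?thesis using A2 B2 by simp
  qed
  also have "\<dots> = 8 * (m + n)^2" by (simp add: power2_eq_square algebra_simps)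
  finally show "(m * A + n * B)^2 \<le> 8 - (m * a + n * b)^2" using assms by simp
qed

lemma concave_gen:
  fixes K B C D :: real
  assumes "D \<ge> 0"
  shows "concave_on domR (\<lambda>y. K + B * fst y + C * snd y + D * sqrt (8 - (snd y)^2))"
  unfolding concave_on_def convex_on_def
proof (intro conjI convex_domR ballI allI impI)
  fix p q :: "real \<times> real" and m n :: real
  assume p: "p \<in> domR" and q: "q \<in> domR" and mn: "m \<ge> 0" "n \<ge> 0" "m + n = 1"
  have r8: "sqrt 8 = 2 * sqrt 2"
    by (metis mult.commute real_sqrt_four real_sqrt_mult num_double numeral_times_numeral real_sqrt_mult_self)
  have bnd: "(snd y)^2 \<le> 8" if "y \<in> domR" for y
  proof -
    have "0 \<le> snd y" "snd y \<le> sqrt 8" using that r8 unfolding domR_def by auto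
    hence "(snd y)^2 \<le> (sqrt 8)^2" by (intro power_mono) auto
    thus ?thesis by simp
  qed
  have "m * sqrt (8 - (snd p)^2) + n * sqrt (8 - (snd q)^2) \<le> sqrt (8 - (m * snd p + n * snd q)^2)"
    by (rule sqrt_comb) (use bnd p q mn in auto)
  hence "D * (m * sqrt (8 - (snd p)^2) + n * sqrt (8 - (snd q)^2)) \<le> D * sqrt (8 - (m * snd p + n * snd q)^2)"
    using assms by (rule mult_left_mono)
  moreover have "K = m * K + n * K" using mn by (metis distrib_right mult_1)
  ultimately show "- (K + B * fst (m *\<^sub>R p + n *\<^sub>R q) + C * snd (m *\<^sub>R p + n *\<^sub>R q) + D * sqrt (8 - (snd (m *\<^sub>R p + n *\<^sub>R q))^2))
    \<le> m * - (K + B * fst p + C * snd p + D * sqrt (8 - (snd p)^2)) + n * - (K + B * fst q + C * snd q + D * sqrt (8 - (snd q)^2))"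
    by (simp add: algebra_simps)
qed

lemma r2sq: "sqrt 2 * sqrt 2 = (2::real)" by simp
lemma r8: "(2 * sqrt 2)^2 = (8::real)" by (simp add: power2_eq_square)

lemma RR_le2: assumes "y \<in> domR" shows "RR y \<le> 2"
proof -
  obtain t s where y: "y = (t, s)" "0 \<le> t" "t \<le> 1" "2 \<le> s" "s \<le> 2 * sqrt 2"
    using assms unfolding domR_def by auto
  have s8: "s^2 \<le> 8" using y r8 by (metis power_mono order.trans[of 0 2 s] zero_le_numeral)
  have q: "sqrt (8 - s^2) \<le> 2 * sqrt 2"
  proof -
    have "sqrt (8 - s^2) \<le> sqrt 8" using y by simp
    also have "sqrt 8 = 2 * sqrt 2" using r8 by (metis abs_of_nonneg real_sqrt_abs zero_le_numeral mult_nonneg_nonneg real_sqrt_ge_zero)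
    finally show ?thesis .
  qed
  have nn: "0 \<le> (s + sqrt (8 - s^2)) / (2 * sqrt 2)" using y s8 by (intro divide_nonneg_pos add_nonneg_nonneg) auto
  have "(s + sqrt (8 - s^2)) / (2 * sqrt 2) \<le> 2"
    using q y by (simp add: divide_le_eq)
  moreover have "sin (pi / 2 * t) \<le> 1" by simp
  ultimately have "sin (pi / 2 * t) * ((s + sqrt (8 - s^2)) / (2 * sqrt 2)) \<le> 1 * 2"
    using nn by (intro mult_mono) auto
  thus ?thesis unfolding RR_def y by simp
qed

definition SS :: "real \<times> real \<Rightarrow> real set" where
  "SS p = {g p | g. concave_on domR g \<and> (\<forall>y\<in>domR. RR y \<le> g y)}"

lemma SS_ne: "SS p \<noteq> {}"
proof -
  have "concave_on domR (\<lambda>y. 2)" using convex_domR by (simp add: concave_on_const)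
  moreover have "\<forall>y\<in>domR. RR y \<le> 2" using RR_le2 by blast
  ultimately show ?thesis unfolding SS_def by blast
qed

lemma env_eq:
  assumes "p \<in> domR" "concave_on domR g" "\<forall>y\<in>domR. RR y \<le> g y" "g p = RR p"
  shows "concave_envelope domR RR p = RR p"
proof -
  have env: "concave_envelope domR RR p = Inf (SS p)" unfolding concave_envelope_def SS_def by simp
  have lb: "\<forall>z\<in>SS p. RR p \<le> z" unfolding SS_def using assms(1) by auto
  have mem: "RR p \<in> SS p" unfolding SS_def using assms(2,3) assms(4)[symmetric] by blast
  have "Inf (SS p) \<le> RR p" by (rule cInf_lower[OF mem]) (use lb in \<open>auto simp: bdd_below_def\<close>)
  moreover have "RR p \<le> Inf (SS p)" by (rule cInf_greatest[OF SS_ne]) (use lb in auto)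
  ultimately show ?thesis using env by simp
qed

lemma env_ge:
  assumes "\<And>g. concave_on domR g \<Longrightarrow> (\<forall>y\<in>domR. RR y \<le> g y) \<Longrightarrow> v \<le> g p"
  shows "v \<le> concave_envelope domR RR p"
proof -
  have env: "concave_envelope domR RR p = Inf (SS p)" unfolding concave_envelope_def SS_def by simp
  have "v \<le> Inf (SS p)" by (rule cInf_greatest[OF SS_ne]) (use assms in \<open>auto simp: SS_def\<close>)
  thus ?thesis using env by simp
qed

lemma cs_facts:
  fixes s :: real
  assumes "2 \<le> s" "s \<le> 2 * sqrt 2"
  shows "(s / (2 * sqrt 2))^2 + (sqrt (8 - s^2) / (2 * sqrt 2))^2 = 1"
    and "s^2 \<le> 8" and "0 \<le> s / (2 * sqrt 2)" and "0 \<le> sqrt (8 - s^2) / (2 * sqrt 2)"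
    and "s / (2 * sqrt 2) \<le> 1"
    and "(s + sqrt (8 - s^2)) / (2 * sqrt 2) = s / (2 * sqrt 2) + sqrt (8 - s^2) / (2 * sqrt 2)"
proof -
  show s8: "s^2 \<le> 8" using assms r8 by (metis power_mono order.trans[of 0 2 s] zero_le_numeral)
  show "(s / (2 * sqrt 2))^2 + (sqrt (8 - s^2) / (2 * sqrt 2))^2 = 1"
    using s8 by (simp add: power_divide power_mult_distrib add_divide_distrib[symmetric])
  show "0 \<le> s / (2 * sqrt 2)" using assms by simp
  show "0 \<le> sqrt (8 - s^2) / (2 * sqrt 2)" using s8 by (intro divide_nonneg_pos) auto
  show "s / (2 * sqrt 2) \<le> 1" using assms by simp
  show "(s + sqrt (8 - s^2)) / (2 * sqrt 2) = s / (2 * sqrt 2) + sqrt (8 - s^2) / (2 * sqrt 2)"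
    by (simp add: add_divide_distrib)
qed

lemma RR_eq:
  "RR (t, s) = sin (pi / 2 * t) * (s / (2 * sqrt 2) + sqrt (8 - s^2) / (2 * sqrt 2))"
  unfolding RR_def by (simp add: add_divide_distrib[symmetric])

lemma RR_le_L:
  fixes d a0 a1 t s :: real
  assumes key: "\<And>u. 0 \<le> u \<Longrightarrow> u \<le> pi/2 \<Longrightarrow> sqrt (2 * (sin u)^2 + 2 * d * sin u + d^2) \<le> a0 + a1 * u"
    and y: "y \<in> domR"
  shows "RR y \<le> a0 + (a1 * (pi / 2)) * fst y + (- (d / (2 * sqrt 2))) * snd y + 0 * sqrt (8 - (snd y)^2)"
proof -
  obtain t' s' where y': "y = (t', s')" "0 \<le> t'" "t' \<le> 1" "2 \<le> s'" "s' \<le> 2 * sqrt 2"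
    using y unfolding domR_def by auto
  define u where "u = pi / 2 * t'"
  define c where "c = s' / (2 * sqrt 2)"
  define sn where "sn = sqrt (8 - s'^2) / (2 * sqrt 2)"
  have u: "0 \<le> u" "u \<le> pi/2" unfolding u_def using y' by auto
  have csn: "c^2 + sn^2 = 1" unfolding c_def sn_def using cs_facts y' by blast
  have "RR y = (sin u + d) * c + sin u * sn - d * c"
    unfolding y' RR_eq u_def[symmetric] c_def[symmetric] sn_def[symmetric] by (simp add: algebra_simps)
  also have "\<dots> \<le> sqrt ((sin u + d)^2 + (sin u)^2) - d * c"
    using cs2[OF csn, of "sin u + d" "sin u"] by simp
  also have "(sin u + d)^2 + (sin u)^2 = 2 * (sin u)^2 + 2 * d * sin u + d^2"
    by (simp add: power2_eq_square algebra_simps)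
  also have "sqrt \<dots> - d * c \<le> a0 + a1 * u - d * c" using key[OF u] by simp
  also have "\<dots> = a0 + (a1 * (pi / 2)) * fst y + (- (d / (2 * sqrt 2))) * snd y + 0 * sqrt (8 - (snd y)^2)"
    unfolding y' u_def c_def by simp
  finally show ?thesis .
qed

lemma alg1:
  fixes c sn w :: real assumes snp: "sn > 0" and csn: "c^2 + sn^2 = 1"
  shows "2 * w^2 + 2 * ((c - sn) * w / sn) * w + ((c - sn) * w / sn)^2 = (w / sn)^2"
proof -
  have "sn^2 * (2 * w^2 + 2 * ((c - sn) * w / sn) * w + ((c - sn) * w / sn)^2) = w^2 * (2 * sn^2 + 2 * (c - sn) * sn + (c - sn)^2)"
    using snp by (simp add: field_simps power2_eq_square)
  also have "2 * sn^2 + 2 * (c - sn) * sn + (c - sn)^2 = c^2 + sn^2" by (simp add: power2_eq_square algebra_simps)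
  also have "w^2 * (c^2 + sn^2) = sn^2 * (w / sn)^2" using csn snp by (simp add: field_simps)
  finally show ?thesis using snp by simp
qed

lemma alg2:
  fixes c sn w :: real assumes snp: "sn > 0" and csn: "c^2 + sn^2 = 1"
  shows "w / sn - (c - sn) * w / sn * c = w * (c + sn)"
proof -
  have "w / sn - (c - sn) * w / sn * c = w * (1 - c^2 + c * sn) / sn" using snp by (simp add: field_simps power2_eq_square)
  also have "1 - c^2 = sn^2" using csn by simp
  also have "w * (sn^2 + c * sn) / sn = w * (c + sn)" using snp by (simp add: field_simps power2_eq_square)
  finally show ?thesis .
qed

lemma L_concave: "concave_on domR (\<lambda>y. a0 + (a1 * (pi / 2)) * fst y + (- (d / (2 * sqrt 2))) * snd y + 0 * sqrt (8 - (snd y)^2))"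
  by (rule concave_gen) simp

lemma suff:
  fixes t s :: real
  assumes t: "0 < t" "t \<le> 1" and s: "2 \<le> s" "s < 2 * sqrt 2"
  defines "x \<equiv> pi/2 * t" and "c \<equiv> s/(2 * sqrt 2)" and "sn \<equiv> sqrt (8 - s^2)/(2 * sqrt 2)"
  defines "a1 \<equiv> (c + sn) * cos x" and "a0 \<equiv> sin x / sn - (c + sn) * x * cos x"
    and "d \<equiv> (c - sn) * sin x / sn"
  assumes da: "d \<le> a0"
  shows "concave_envelope domR RR (t, s) = RR (t, s)"
proof -
  have csn: "c^2 + sn^2 = 1" unfolding c_def sn_def using cs_facts s by auto
  have s8: "s^2 < 8"
  proof -
    have "s^2 < (2 * sqrt 2)^2" using s by (intro power_strict_mono) auto
    thus ?thesis using r8 by simp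
  qed
  have snp: "sn > 0" unfolding sn_def using s8 by simp
  have cp: "c > 0" unfolding c_def using s by simp
  have snc: "sn \<le> c"
  proof -
    have "2^2 \<le> s^2" using s by (intro power_mono) auto
    hence "4 \<le> s^2" by simp
    hence "sn^2 \<le> c^2" unfolding sn_def c_def using s8
      by (simp add: power_divide power_mult_distrib divide_right_mono)
    thus ?thesis using cp power2_le_imp_le[of sn c] by linarith
  qed
  have x: "0 < x" "x \<le> pi/2" unfolding x_def using t by auto
  have sx: "sin x > 0" using x by (intro sin_gt_zero) auto
  have cx: "cos x \<ge> 0" using x by (intro cos_ge_zero) auto
  have d0: "d \<ge> 0" unfolding d_def using snc snp sx by simp
  have key: "sqrt (2 * (sin u)^2 + 2 * d * sin u + d^2) \<le> a0 + a1 * u" if u: "0 \<le> u" "u \<le> pi/2" for u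
  proof (cases "d > 0")
    case True
    have q: "2 * (sin x)^2 + 2 * d * sin x + d^2 = (sin x / sn)^2"
      unfolding d_def using alg1[OF snp csn] by simp
    have e1: "sqrt (2 * (sin x)^2 + 2 * d * sin x + d^2) = a0 + a1 * x"
      unfolding q a0_def a1_def using snp sx by simp
    have e2: "(2 * sin x + d) * cos x / sqrt (2 * (sin x)^2 + 2 * d * sin x + d^2) = a1"
    proof -
      have r: "sqrt (2 * (sin x)^2 + 2 * d * sin x + d^2) = sin x / sn" unfolding q using snp sx by simp
      have "(2 * sin x + (c - sn) * sin x / sn) * cos x / (sin x / sn) = (c + sn) * cos x"
        using snp sx by (simp add: field_simps)
      hence "(2 * sin x + d) * cos x / (sin x / sn) = a1" unfolding a1_def d_def .
      thus ?thesis using r by simp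
    qed
    show ?thesis by (rule E_main[OF True x da e1 e2 u])
  next
    case False
    hence dz: "d = 0" using d0 by simp
    hence ceq: "c = sn" unfolding d_def using snp sx by simp
    have sn2: "sn * sqrt 2 = 1"
    proof -
      have "(sn * sqrt 2)^2 = 1" using csn ceq by (simp add: power_mult_distrib)
      thus ?thesis using snp by (intro power2_eq_imp_eq[of "sn * sqrt 2" 1]) auto
    qed
    have "sqrt (2 * (sin u)^2 + 2 * d * sin u + d^2) = sqrt 2 * sin u"
      using dz u by (simp add: real_sqrt_mult sin_ge_zero)
    also have "\<dots> \<le> sqrt 2 * (sin x + cos x * (u - x))"
      using sin_tangent[OF u] x by simp
    also have "\<dots> = a0 + a1 * u"
    proof -
      have "1 / sn = sqrt 2" using sn2 snp by (simp add: field_simps)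
      moreover have "c + sn = sqrt 2"
      proof -
        have "c + sn = sn * sqrt 2 * sqrt 2" using ceq by (simp add: mult.assoc)
        thus ?thesis using sn2 by simp
      qed
      ultimately show ?thesis unfolding a0_def a1_def by (simp add: algebra_simps divide_inverse)
    qed
    finally show ?thesis .
  qed
  have p: "(t, s) \<in> domR" unfolding domR_def using t s by auto
  show ?thesis
  proof (rule env_eq[OF p L_concave])
    show "\<forall>y\<in>domR. RR y \<le> a0 + a1 * (pi / 2) * fst y + - (d / (2 * sqrt 2)) * snd y + 0 * sqrt (8 - (snd y)\<^sup>2)"
      using RR_le_L[OF key] by blast
    have "a0 + a1 * x = sin x / sn" unfolding a0_def a1_def by (simp add: algebra_simps)
    hence "a0 + a1 * (pi / 2) * t - d * c = sin x / sn - (c - sn) * sin x / sn * c"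
      unfolding x_def d_def by (simp add: algebra_simps)
    also have "\<dots> = sin x * (c + sn)" by (rule alg2[OF snp csn])
    finally have "a0 + a1 * (pi / 2) * t - d * c = sin x * (c + sn)" .
    thus "a0 + a1 * (pi / 2) * fst (t, s) + - (d / (2 * sqrt 2)) * snd (t, s) + 0 * sqrt (8 - (snd (t, s))\<^sup>2) = RR (t, s)"
      unfolding RR_eq c_def sn_def x_def by simp
  qed
qed

lemma edge:
  fixes t :: real
  assumes t: "0 < t" "t \<le> 1"
  shows "concave_envelope domR RR (t, 2 * sqrt 2) = RR (t, 2 * sqrt 2)"
proof -
  define x where "x = pi / 2 * t"
  have x: "0 \<le> x" "x \<le> pi/2" unfolding x_def using t by auto
  define g where "g = (\<lambda>y::real\<times>real. (sin x - cos x * x) + (cos x * (pi / 2)) * fst y + 0 * snd y + (1 / (2 * sqrt 2)) * sqrt (8 - (snd y)^2))"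
  have gc: "concave_on domR g" unfolding g_def by (rule concave_gen) simp
  have p: "(t, 2 * sqrt 2) \<in> domR" unfolding domR_def using t by auto
  show ?thesis
  proof (rule env_eq[OF p gc])
    show "\<forall>y\<in>domR. RR y \<le> g y"
    proof
      fix y assume y: "y \<in> domR"
      obtain t' s' where y': "y = (t', s')" "0 \<le> t'" "t' \<le> 1" "2 \<le> s'" "s' \<le> 2 * sqrt 2"
        using y unfolding domR_def by auto
      define u where "u = pi / 2 * t'"
      define c where "c = s' / (2 * sqrt 2)"
      define sn where "sn = sqrt (8 - s'^2) / (2 * sqrt 2)"
      have u: "0 \<le> u" "u \<le> pi/2" unfolding u_def using y' by auto
      have c1: "c \<le> 1" "0 \<le> c" "0 \<le> sn" unfolding c_def sn_def using cs_facts y' by auto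
      have su: "0 \<le> sin u" "sin u \<le> 1" using u by (auto intro: sin_ge_zero)
      have "RR y = sin u * c + sin u * sn"
        unfolding y' RR_eq u_def[symmetric] c_def[symmetric] sn_def[symmetric] by (simp add: algebra_simps)
      also have "\<dots> \<le> sin u + sn"
      proof -
        have "sin u * c \<le> sin u * 1" using su c1 by (intro mult_left_mono) auto
        moreover have "sin u * sn \<le> 1 * sn" using su c1 by (intro mult_right_mono) auto
        ultimately show ?thesis by simp
      qed
      also have "\<dots> \<le> sin x + cos x * (u - x) + sn" using sin_tangent[OF u x] by simp
      also have "\<dots> = g y" unfolding g_def y' u_def sn_def by (simp add: algebra_simps)
      finally show "RR y \<le> g y" .
    qed
    have "(2 * sqrt 2)^2 = (8::real)" by (rule r8)
    thus "g (t, 2 * sqrt 2) = RR (t, 2 * sqrt 2)" unfolding g_def RR_eq x_def by simp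
  qed
qed

lemma hderiv:
  fixes t s :: real
  assumes s: "2 < s" "s < 2 * sqrt 2"
  defines "x \<equiv> pi/2 * t" and "c \<equiv> s/(2 * sqrt 2)" and "sn \<equiv> sqrt (8 - s^2)/(2 * sqrt 2)"
  shows "((\<lambda>m. m * RR (t / m, 2 * sqrt 2 + (s - 2 * sqrt 2) / m)) has_real_derivative
           (sin x * (1 - c + sn) / sn - (c + sn) * x * cos x)) (at 1)"
proof -
  define r where "r = sqrt (2::real)"
  have rr: "r * r = 2" unfolding r_def by simp
  have rp: "r > 0" unfolding r_def by simp
  have s8: "s^2 < 8"
  proof -
    have "s^2 < (2 * sqrt 2)^2" using s by (intro power_strict_mono) auto
    thus ?thesis using r8 by simp
  qed
  define q where "q = sqrt (8 - s^2)"
  have qp: "q > 0" unfolding q_def using s8 by simp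
  have dsig: "((\<lambda>m. 2 * r + (s - 2 * r) / m) has_real_derivative (2 * r - s)) (at 1)"
    by (auto intro!: derivative_eq_intros)
  have dg: "((\<lambda>m. 8 - (2 * r + (s - 2 * r) / m)^2) has_real_derivative (- (2 * s * (2 * r - s)))) (at 1)"
    by (auto intro!: derivative_eq_intros)
  have dsq: "((\<lambda>m. sqrt (8 - (2 * r + (s - 2 * r) / m)^2)) has_real_derivative (inverse q / 2 * (- (2 * s * (2 * r - s))))) (at 1)"
  proof -
    have "8 - (2 * r + (s - 2 * r) / 1)^2 = 8 - s^2" by simp
    hence e: "sqrt (8 - (2 * r + (s - 2 * r) / 1)^2) = q" unfolding q_def by simp
    have "(sqrt has_real_derivative inverse (sqrt (8 - s^2)) / 2) (at (8 - (2 * r + (s - 2 * r) / 1)^2))"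
      using DERIV_real_sqrt[of "8 - s^2"] s8 by simp
    from DERIV_chain2[OF this dg] show ?thesis unfolding q_def by simp
  qed
  have dA: "((\<lambda>m. sin (pi / 2 * (t / m))) has_real_derivative (cos x * (- (pi / 2 * t)))) (at 1)"
    unfolding x_def by (auto intro!: derivative_eq_intros)
  have dB: "((\<lambda>m. (2 * r + (s - 2 * r) / m) / (2 * r) + sqrt (8 - (2 * r + (s - 2 * r) / m)^2) / (2 * r))
     has_real_derivative ((2 * r - s) / (2 * r) + (inverse q / 2 * (- (2 * s * (2 * r - s)))) / (2 * r))) (at 1)"
    by (intro DERIV_add DERIV_cdivide dsig dsq)
  have dh: "((\<lambda>m. m * sin (pi / 2 * (t / m)) * ((2 * r + (s - 2 * r) / m) / (2 * r) + sqrt (8 - (2 * r + (s - 2 * r) / m)^2) / (2 * r)))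
     has_real_derivative
     ((1 * sin (pi / 2 * (t / 1)) + 1 * (cos x * (- (pi / 2 * t)))) * ((2 * r + (s - 2 * r) / 1) / (2 * r) + sqrt (8 - (2 * r + (s - 2 * r) / 1)^2) / (2 * r))
      + 1 * sin (pi / 2 * (t / 1)) * ((2 * r - s) / (2 * r) + (inverse q / 2 * (- (2 * s * (2 * r - s)))) / (2 * r)))) (at 1)"
    by (rule DERIV_cong[OF DERIV_mult[OF DERIV_mult[OF DERIV_ident dA] dB]]) (simp add: algebra_simps)
  have val: "(1 * sin (pi / 2 * (t / 1)) + 1 * (cos x * (- (pi / 2 * t)))) * ((2 * r + (s - 2 * r) / 1) / (2 * r) + sqrt (8 - (2 * r + (s - 2 * r) / 1)^2) / (2 * r))
      + 1 * sin (pi / 2 * (t / 1)) * ((2 * r - s) / (2 * r) + (inverse q / 2 * (- (2 * s * (2 * r - s)))) / (2 * r))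
      = sin x * (1 - c + sn) / sn - (c + sn) * x * cos x"
  proof -
    have cd: "c = s / (2 * r)" unfolding c_def r_def by simp
    have snd': "sn = q / (2 * r)" unfolding sn_def q_def r_def by simp
    have snp: "sn > 0" using snd' qp rp by simp
    have sx: "sin (pi / 2 * (t / 1)) = sin x" unfolding x_def by simp
    have B1: "(2 * r + (s - 2 * r) / 1) / (2 * r) + sqrt (8 - (2 * r + (s - 2 * r) / 1)^2) / (2 * r) = c + sn"
      unfolding cd snd' q_def by (simp add: add_divide_distrib)
    have B'1: "(2 * r - s) / (2 * r) + (inverse q / 2 * (- (2 * s * (2 * r - s)))) / (2 * r) = (1 - c) * (sn - c) / sn"
      unfolding cd snd' using rp qp rr by (simp add: field_simps)
    have "sin x * (c + sn) - x * cos x * (c + sn) + sin x * ((1 - c) * (sn - c) / sn) = sin x * (1 - c + sn) / sn - (c + sn) * x * cos x"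
    proof -
      have "sin x * (c + sn) + sin x * ((1 - c) * (sn - c) / sn) = sin x * ((c + sn) * sn + (1 - c) * (sn - c)) / sn"
        using snp by (simp add: field_simps)
      also have "(c + sn) * sn + (1 - c) * (sn - c) = (1 - c + sn) - (1 - c^2 - sn^2)" by (simp add: power2_eq_square algebra_simps)
      also have "1 - c^2 - sn^2 = 0"
      proof -
        have "c^2 + sn^2 = 1" unfolding c_def sn_def using cs_facts s by auto
        thus ?thesis by simp
      qed
      finally show ?thesis by (simp add: algebra_simps)
    qed
    thus ?thesis unfolding B1 B'1 sx x_def by (simp add: algebra_simps)
  qed
  have "(\<lambda>m. m * RR (t / m, 2 * sqrt 2 + (s - 2 * sqrt 2) / m)) = (\<lambda>m. m * sin (pi / 2 * (t / m)) * ((2 * r + (s - 2 * r) / m) / (2 * r) + sqrt (8 - (2 * r + (s - 2 * r) / m)^2) / (2 * r)))"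
    unfolding RR_eq r_def by (simp add: mult.assoc)
  thus ?thesis using dh val by simp
qed

lemma nec:
  fixes t s :: real
  assumes t: "0 < t" "t < 1" and s: "2 < s" "s < 2 * sqrt 2"
  defines "x \<equiv> pi/2 * t" and "c \<equiv> s/(2 * sqrt 2)" and "sn \<equiv> sqrt (8 - s^2)/(2 * sqrt 2)"
  assumes neg: "sin x * (1 - c + sn) / sn - (c + sn) * x * cos x < 0"
  shows "RR (t, s) < concave_envelope domR RR (t, s)"
proof -
  define h where "h = (\<lambda>m. m * RR (t / m, 2 * sqrt 2 + (s - 2 * sqrt 2) / m))"
  have dh: "(h has_real_derivative (sin x * (1 - c + sn) / sn - (c + sn) * x * cos x)) (at 1)"
    unfolding h_def x_def c_def sn_def using hderiv[OF s] by simp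
  obtain del where del: "del > 0" "\<And>k. k > 0 \<Longrightarrow> k < del \<Longrightarrow> h 1 < h (1 - k)"
    using DERIV_neg_dec_left[OF dh neg] by blast
  define R where "R = 2 * sqrt 2"
  have R2: "R > 2"
  proof -
    have "(2::real) < 2 * sqrt 2" using s by simp
    thus ?thesis unfolding R_def .
  qed
  define m0 where "m0 = (R - s) / (R - 2)"
  have m0: "0 < m0" "m0 < 1" unfolding m0_def using s R2 unfolding R_def by (auto simp: field_simps)
  define k where "k = min (del / 2) (min ((1 - t) / 2) ((1 - m0) / 2))"
  have k: "0 < k" "k < del" "k \<le> (1 - t) / 2" "k \<le> (1 - m0) / 2"
  proof -
    have "k \<le> (1 - t) / 2" "k \<le> (1 - m0) / 2" "k \<le> del / 2" unfolding k_def
      by (simp_all only: min_le_iff_disj order_refl disj_ac simp_thms)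
    moreover have "0 < k" unfolding k_def using del t m0 by auto
    ultimately show "0 < k" "k < del" "k \<le> (1 - t) / 2" "k \<le> (1 - m0) / 2" using del by auto
  qed
  define m where "m = 1 - k"
  have mm: "0 < m" "m < 1" "t \<le> m" "m0 \<le> m" unfolding m_def using k t m0 by auto
  have hlt: "h 1 < h m" unfolding m_def using del(2)[OF k(1,2)] .
  have h1: "h 1 = RR (t, s)" unfolding h_def by simp
  define q where "q = (t / m, R + (s - R) / m)"
  have qD: "q \<in> domR"
  proof -
    have "t / m \<le> 1" using mm by simp
    moreover have "0 \<le> t / m" using mm t by simp
    moreover have "R + (s - R) / m \<le> R" using mm s unfolding R_def by (simp add: divide_nonpos_pos)
    moreover have "2 \<le> R + (s - R) / m"
    proof -
      have "(R - s) / m \<le> (R - s) / m0" using mm m0 s unfolding R_def by (intro divide_left_mono) auto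
      also have "\<dots> = R - 2" unfolding m0_def using R2 s unfolding R_def by (auto simp: field_simps)
      finally have "(R - s) / m \<le> R - 2" .
      moreover have "(s - R) / m = - ((R - s) / m)" by (metis minus_diff_eq minus_divide_left)
      ultimately show ?thesis by linarith
    qed
    ultimately show ?thesis unfolding q_def domR_def R_def by auto
  qed
  define e where "e = (0::real, R)"
  have eD: "e \<in> domR" unfolding e_def domR_def R_def using R2 R_def by auto
  have RRe: "RR e = 0" unfolding e_def RR_def by simp
  have pe: "(t, s) = (1 - m) *\<^sub>R e + m *\<^sub>R q"
    unfolding e_def q_def using mm by (simp add: field_simps)
  have hm: "h m = m * RR q" unfolding h_def q_def R_def by simp
  have "h m \<le> concave_envelope domR RR (t, s)"
  proof (rule env_ge)
    fix g assume gc: "concave_on domR g" and gm: "\<forall>y\<in>domR. RR y \<le> g y"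
    have "(1 - m) * (- g e) + m * (- g q) \<ge> - g ((1 - m) *\<^sub>R e + m *\<^sub>R q)"
      using gc eD qD mm unfolding concave_on_def convex_on_def by auto
    hence "g (t, s) \<ge> (1 - m) * g e + m * g q" unfolding pe[symmetric] by (simp add: algebra_simps)
    moreover have "g e \<ge> 0" using gm eD RRe by force
    moreover have "g q \<ge> RR q" using gm qD by blast
    ultimately have "g (t, s) \<ge> m * RR q" using mm
      by (smt (verit, best) mult_left_mono mult_nonneg_nonneg)
    thus "h m \<le> g (t, s)" using hm by simp
  qed
  thus ?thesis using hlt h1 by simp
qed

lemma xcos_le_sin:
  fixes x :: real assumes "0 < x" "x \<le> pi/2" shows "x * cos x \<le> sin x"
proof -
  have "x^2 * cos x \<le> (sin x)^2" using sq_cos_le assms by simp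
  also have "(sin x)^2 \<le> x * sin x"
  proof -
    have "0 \<le> sin x" using assms by (intro sin_ge_zero) auto
    hence "sin x * sin x \<le> x * sin x" using sin_x_le_x[of x] assms by (intro mult_right_mono) auto
    thus ?thesis by (simp add: power2_eq_square)
  qed
  finally have "x * (x * cos x) \<le> x * sin x" by (simp add: power2_eq_square mult.assoc)
  thus ?thesis using assms by simp
qed

lemma C_equiv:
  fixes t s :: real
  assumes t: "0 < t" "t < 1" and s: "2 \<le> s" "s < 2 * sqrt 2"
  defines "x \<equiv> pi/2 * t" and "c \<equiv> s/(2 * sqrt 2)" and "sn \<equiv> sqrt (8 - s^2)/(2 * sqrt 2)"
  defines "\<epsilon> \<equiv> 1 - s / (2 * sqrt 2)"
  shows "(tan x / x \<ge> (2 + sqrt ((2 - \<epsilon>) * \<epsilon>) - \<epsilon> * (5 - 2 * \<epsilon>)) / (2 * (1 - \<epsilon>)))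
     \<longleftrightarrow> 0 \<le> sin x * (1 - c + sn) / sn - (c + sn) * x * cos x"
proof -
  have csn: "c^2 + sn^2 = 1" unfolding c_def sn_def using cs_facts s by auto
  have s8: "s^2 < 8"
  proof -
    have "s^2 < (2 * sqrt 2)^2" using s by (intro power_strict_mono) auto
    thus ?thesis using r8 by simp
  qed
  have snp: "sn > 0" unfolding sn_def using s8 by simp
  have cp: "c > 0" unfolding c_def using s by simp
  have c1: "c \<le> 1" unfolding c_def using cs_facts s by auto
  have x: "0 < x" "x < pi/2" unfolding x_def using t by auto
  have cx: "cos x > 0" using x by (intro cos_gt_zero) auto
  have ee: "\<epsilon> = 1 - c" unfolding \<epsilon>_def c_def ..
  have sq: "sqrt ((2 - \<epsilon>) * \<epsilon>) = sn"
  proof -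
    have "(2 - \<epsilon>) * \<epsilon> = sn^2" unfolding ee using csn by (simp add: power2_eq_square algebra_simps)
    thus ?thesis using snp by simp
  qed
  define K where "K = (2 + sn - (1 - c) * (5 - 2 * (1 - c))) / (2 * c)"
  have rhs: "(2 + sqrt ((2 - \<epsilon>) * \<epsilon>) - \<epsilon> * (5 - 2 * \<epsilon>)) / (2 * (1 - \<epsilon>)) = K"
    unfolding sq unfolding K_def ee by simp
  have Kid: "(1 - c + sn) / sn * K = c + sn"
  proof -
    have e: "(1 - c + sn) * (2 + sn - (1 - c) * (5 - 2 * (1 - c))) = (c + sn) * (2 * c * sn)"
      using csn by algebra
    show ?thesis unfolding K_def using e snp cp by (simp add: field_simps)
  qed
  have a: "sin x * (1 - c + sn) / sn - (c + sn) * x * cos x = ((1 - c + sn) / sn) * (sin x - K * (x * cos x))"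
  proof -
    have "((1 - c + sn) / sn) * (sin x - K * (x * cos x)) = (1 - c + sn) / sn * sin x - ((1 - c + sn) / sn * K) * (x * cos x)"
      by (simp add: algebra_simps)
    also have "\<dots> = sin x * (1 - c + sn) / sn - (c + sn) * x * cos x" unfolding Kid by simp
    finally show ?thesis by simp
  qed
  have pos: "(1 - c + sn) / sn > 0" using snp c1 by simp
  have "tan x / x \<ge> K \<longleftrightarrow> sin x / (x * cos x) \<ge> K" by (simp add: tan_def mult.commute)
  also have "\<dots> \<longleftrightarrow> sin x \<ge> K * (x * cos x)" using x cx by (simp add: le_divide_eq)
  also have "\<dots> \<longleftrightarrow> 0 \<le> ((1 - c + sn) / sn) * (sin x - K * (x * cos x))"
    using pos zero_le_mult_iff[of "(1 - c + sn) / sn" "sin x - K * (x * cos x)"] by (simp only:) linarith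
  finally show ?thesis unfolding rhs a .
qed



theorem mainTheorem3:
  fixes t s :: real
  assumes "0 < t" "t \<le> 1" "2 \<le> s" "s \<le> 2 * sqrt 2"
  defines "\<epsilon> \<equiv> 1 - s / (2 * sqrt 2)"
  defines "C \<equiv> (t = 1 \<or> tan (pi / 2 * t) / (pi / 2 * t)
                 \<ge> (2 + sqrt ((2 - \<epsilon>) * \<epsilon>) - \<epsilon> * (5 - 2 * \<epsilon>)) / (2 * (1 - \<epsilon>)))"
  shows "(RR (t, s) = concave_envelope domR RR (t, s) \<longleftrightarrow> C)
         \<and> ((pi / 2 * t) / sin (pi / 2 * t) \<ge> (s + sqrt (8 - s\<^sup>2)) / (2 * sqrt 2) \<longrightarrow> C)"
proof -
  define x where "x = pi/2 * t"
  define c where "c = s/(2 * sqrt 2)"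
  define sn where "sn = sqrt (8 - s^2)/(2 * sqrt 2)"
  have x: "0 < x" "x \<le> pi/2" unfolding x_def using assms by auto
  have sx: "sin x > 0" using x by (intro sin_gt_zero) auto
  show ?thesis
  proof (cases "s = 2 * sqrt 2")
    case True
    have env: "RR (t, s) = concave_envelope domR RR (t, s)" using edge[OF assms(1,2)] True by simp
    have CC: C
    proof (cases "t = 1")
      case True thus ?thesis unfolding C_def by simp
    next
      case False
      hence x2: "x < pi/2" unfolding x_def using assms by auto
      have cx: "cos x > 0" using x x2 by (intro cos_gt_zero) auto
      have e0: "\<epsilon> = 0" unfolding \<epsilon>_def using True by simp
      have "x * cos x \<le> sin x" using xcos_le_sin x by simp
      hence "1 \<le> tan x / x" using x cx by (simp add: tan_def field_simps)
      thus ?thesis unfolding C_def e0 x_def[symmetric] by simp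
    qed
    show ?thesis using env CC by simp
  next
    case False
    hence s2: "s < 2 * sqrt 2" using assms by simp
    have csn: "c^2 + sn^2 = 1" unfolding c_def sn_def using cs_facts assms by auto
    have s8: "s^2 < 8"
    proof -
      have "s^2 < (2 * sqrt 2)^2" using s2 assms by (intro power_strict_mono) auto
      thus ?thesis using r8 by simp
    qed
    have snp: "sn > 0" unfolding sn_def using s8 by simp
    have c1: "c \<le> 1" unfolding c_def using cs_facts assms by auto
    define a0d where "a0d = sin x * (1 - c + sn) / sn - (c + sn) * x * cos x"
    have dle: "(c - sn) * sin x / sn \<le> sin x / sn - (c + sn) * x * cos x \<longleftrightarrow> 0 \<le> a0d"
    proof -
      have "sin x / sn - (c + sn) * x * cos x - (c - sn) * sin x / sn = a0d"
        unfolding a0d_def using snp by (simp add: field_simps)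
      thus ?thesis by linarith
    qed
    have suffC: "0 \<le> a0d \<Longrightarrow> RR (t, s) = concave_envelope domR RR (t, s)"
      using suff[OF assms(1,2,3) s2] dle unfolding x_def c_def sn_def by simp
    have second: "(pi / 2 * t) / sin (pi / 2 * t) \<ge> (s + sqrt (8 - s\<^sup>2)) / (2 * sqrt 2) \<Longrightarrow> 0 \<le> a0d"
    proof -
      assume h: "(pi / 2 * t) / sin (pi / 2 * t) \<ge> (s + sqrt (8 - s\<^sup>2)) / (2 * sqrt 2)"
      have phi: "c + sn \<le> x / sin x" using h unfolding x_def c_def sn_def by (simp add: add_divide_distrib)
      have cx: "cos x \<ge> 0" using x by (intro cos_ge_zero) auto
      have "(c + sn) * x * cos x \<le> (x / sin x) * x * cos x"
        using phi x cx by (intro mult_right_mono) auto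
      also have "\<dots> = (x^2 * cos x) / sin x" by (simp add: power2_eq_square)
      also have "\<dots> \<le> (sin x)^2 / sin x" using sq_cos_le[of x] x sx by (intro divide_right_mono) auto
      also have "\<dots> = sin x" by (simp add: power2_eq_square)
      also have "sin x \<le> sin x * (1 - c + sn) / sn"
      proof -
        have "1 \<le> (1 - c + sn) / sn" using snp c1 by simp
        hence "sin x * 1 \<le> sin x * ((1 - c + sn) / sn)" using sx by (intro mult_left_mono) auto
        thus ?thesis by simp
      qed
      finally show "0 \<le> a0d" unfolding a0d_def by simp
    qed
    show ?thesis
    proof (cases "t = 1")
      case True
      have "0 \<le> a0d" unfolding a0d_def x_def True using snp c1 by simp
      thus ?thesis using suffC unfolding C_def using True by simp
    next
      case False
      hence t1: "t < 1" using assms by simp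
      have CE: "C \<longleftrightarrow> 0 \<le> a0d"
        using C_equiv[OF assms(1) t1 assms(3) s2] False unfolding C_def a0d_def x_def c_def sn_def \<epsilon>_def by simp
      have main: "RR (t, s) = concave_envelope domR RR (t, s) \<longleftrightarrow> 0 \<le> a0d"
      proof
        assume eq: "RR (t, s) = concave_envelope domR RR (t, s)"
        show "0 \<le> a0d"
        proof (rule ccontr)
          assume neg: "\<not> 0 \<le> a0d"
          have "s \<noteq> 2"
          proof
            assume s2': "s = 2"
            have "c = sn"
            proof -
              have "c^2 = 1/2" unfolding c_def s2' by (simp add: power_divide power_mult_distrib)
              moreover have "sn^2 = 1/2" using csn \<open>c^2 = 1/2\<close> by simp
              ultimately have "c^2 = sn^2" by simp
              moreover have "c \<ge> 0" unfolding c_def using assms by simp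
              ultimately show ?thesis using snp by (simp add: power2_eq_iff)
            qed
            hence "2 * sn^2 = 1" using csn by simp
            have "a0d = (sin x - (2 * sn^2) * x * cos x) / sn"
              unfolding a0d_def \<open>c = sn\<close> using snp by (simp add: field_simps power2_eq_square)
            also have "\<dots> = (sin x - x * cos x) / sn" using \<open>2 * sn^2 = 1\<close> by simp
            finally have "a0d \<ge> 0" using xcos_le_sin[OF x] snp by simp
            thus False using neg by simp
          qed
          hence s2'': "2 < s" using assms by simp
          have "RR (t, s) < concave_envelope domR RR (t, s)"
            using nec[OF assms(1) t1 s2'' s2] neg unfolding a0d_def x_def c_def sn_def by simp
          thus False using eq by simp
        qed
      qed (rule suffC)
      show ?thesis using main CE second by blast
    qed
  qed
qed

end
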